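(* Let $d$ and $m$ be positive integers with $m\ge 3$ and $m>2^{d-1}$. Let $w$ be a vertex of $\Gamma_m^*$ (defined below) with $\mathrm{d}((x_1,0),w)=d$ in $\Gamma_m^*$. Write $w=(x_{\beta_1}+\dots+x_{\beta_s},0)$ with $\beta_1<\dots<\beta_s$ (the unique expression of the first coordinate in the basis $x_1,\dots,x_m$). Then every index $n\in\{\beta_1,\dots,\beta_s\}$ satisfies $n\le 2^{d-1}+1$.
   Context: For an integer $m\ge 3$, let $V_m$ and $W_m$ be vector spaces over $\mathrm{GF}(2)$ of dimensions $m$ and $m-2$, with ordered bases $x_1,\dots,x_m$ and $y_1,\dots,y_{m-2}$ respectively. Let $f_m:V_m\times V_m\to W_m$ be the bilinear map determined on basis vectors by $f_m(x_i,x_j)=0$ if $j\in\{i,i+1\}$, $f_m(x_i,x_j)=y_{j-i-1}$ if $i+2\le j\le m$, and $f_m(x_i,x_j)=0$ if $i>j$. The group $H_m$ has underlying set $V_m\times W_m$ with multiplication $(a,b)\cdot(c,d)=(a+c,\ f_m(a,c)+b+d)$; its identity is $(0,0)$. The graph $\Gamma_m^*$ has as vertex set the non-identity elements of $X=\{(v,0)\mid v\in V_m\}$, two distinct vertices being adjacent if and only if they commute in $H_m$; $\mathrm{d}(\cdot,\cdot)$ denotes graph distance in $\Gamma_m^*$. *)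

theory Defs
  imports Main
begin

text \<open>Vectors of V_m = GF(2)^m with basis x_1..x_m are represented by their support
  (a subset of {1..m}); likewise vectors of W_m by subsets of {1..m-2}.
  Addition over GF(2) is symmetric difference.\<close>

definition gf2_add :: "nat set \<Rightarrow> nat set \<Rightarrow> nat set" where
  "gf2_add A B = (A - B) \<union> (B - A)"

definition Vm :: "nat \<Rightarrow> nat set set" where
  "Vm m = {A. A \<subseteq> {1..m}}"

definition fbasis :: "nat \<Rightarrow> nat \<Rightarrow> nat \<Rightarrow> nat set" where
  "fbasis m i j = (if i + 2 \<le> j \<and> j \<le> m then {j - i - 1} else {})"

text \<open>Bilinear extension over GF(2): coordinate y_k of f_m(a,c) is the parity of the number
  of pairs (i,j) with i in supp a, j in supp c whose basis value contains y_k.\<close>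
definition fm :: "nat \<Rightarrow> nat set \<Rightarrow> nat set \<Rightarrow> nat set" where
  "fm m A C = {k. odd (card {(i, j). i \<in> A \<and> j \<in> C \<and> k \<in> fbasis m i j})}"

definition Hmult :: "nat \<Rightarrow> nat set \<times> nat set \<Rightarrow> nat set \<times> nat set \<Rightarrow> nat set \<times> nat set" where
  "Hmult m p q = (gf2_add (fst p) (fst q), gf2_add (gf2_add (fm m (fst p) (fst q)) (snd p)) (snd q))"

definition Gamma_verts :: "nat \<Rightarrow> (nat set \<times> nat set) set" where
  "Gamma_verts m = {(v, {}) | v. v \<in> Vm m \<and> v \<noteq> {}}"

definition Gamma_adj :: "nat \<Rightarrow> nat set \<times> nat set \<Rightarrow> nat set \<times> nat set \<Rightarrow> bool" where
  "Gamma_adj m u v \<longleftrightarrow> u \<in> Gamma_verts m \<and> v \<in> Gamma_verts m \<and> u \<noteq> v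
      \<and> Hmult m u v = Hmult m v u"

definition graph_dist_is :: "('a \<Rightarrow> 'a \<Rightarrow> bool) \<Rightarrow> 'a \<Rightarrow> 'a \<Rightarrow> nat \<Rightarrow> bool" where
  "graph_dist_is adj u w n \<longleftrightarrow> (adj ^^ n) u w \<and> (\<forall>k<n. \<not> (adj ^^ k) u w)"

end

theory Submission
  imports Defs
begin

lemma core:
  assumes A: "A \<subseteq> {1..m}" and C: "C \<subseteq> {1..m}" and ne: "A \<noteq> {}"
    and eq: "fm m A C = fm m C A" and qC: "q \<in> C"
  shows "q \<le> max (2 * Max A - 1) (Max A + 1)"
proof (rule ccontr)
  assume nq: "\<not> ?thesis"
  have fA: "finite A" using A finite_subset by blast
  have fC: "finite C" using C finite_subset by blast
  define p where "p = Max A"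
  define i0 where "i0 = Min A"
  define Q where "Q = Max C"
  have CneQ: "C \<noteq> {}" using qC by auto
  have qQ: "q \<le> Q" unfolding Q_def using fC qC by simp
  have QC: "Q \<in> C" unfolding Q_def using fC CneQ by simp
  have i0A: "i0 \<in> A" unfolding i0_def using fA ne by simp
  have i0p: "i0 \<le> p" unfolding i0_def p_def using fA ne by simp
  have i01: "i0 \<ge> 1" using i0A A by auto
  have Qm: "Q \<le> m" using QC C by auto
  have Qbig: "Q \<ge> 2 * p" "Q \<ge> p + 2" using nq qQ unfolding p_def by auto
  define k where "k = Q - i0 - 1"
  have S1: "{(i, j). i \<in> A \<and> j \<in> C \<and> k \<in> fbasis m i j} = {(i0, Q)}"
  proof (rule set_eqI, clarify)
    fix i j
    show "((i, j) \<in> {(i, j). i \<in> A \<and> j \<in> C \<and> k \<in> fbasis m i j}) = ((i, j) \<in> {(i0, Q)})"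
    proof
      assume "(i, j) \<in> {(i, j). i \<in> A \<and> j \<in> C \<and> k \<in> fbasis m i j}"
      hence h: "i \<in> A" "j \<in> C" "k \<in> fbasis m i j" by auto
      have "i0 \<le> i" unfolding i0_def using fA h(1) by simp
      moreover have "j \<le> Q" unfolding Q_def using fC h(2) by simp
      moreover have "i + 2 \<le> j" "j - i - 1 = k" using h(3) unfolding fbasis_def by (auto split: if_splits)
      ultimately show "(i, j) \<in> {(i0, Q)}" using Qbig i0p unfolding k_def by auto
    next
      assume "(i, j) \<in> {(i0, Q)}"
      thus "(i, j) \<in> {(i, j). i \<in> A \<and> j \<in> C \<and> k \<in> fbasis m i j}"
        using i0A QC Qbig i0p Qm unfolding fbasis_def k_def by auto
    qed
  qed
  have S2': "\<not> (i \<in> C \<and> j \<in> A \<and> k \<in> fbasis m i j)" for i j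
  proof
    assume "i \<in> C \<and> j \<in> A \<and> k \<in> fbasis m i j"
    hence h: "i \<in> C" "j \<in> A" "k \<in> fbasis m i j" by auto
    have "j \<le> p" unfolding p_def using fA h(2) by simp
    moreover have "i \<ge> 1" using h(1) C by auto
    moreover have "i + 2 \<le> j" "j - i - 1 = k" using h(3) unfolding fbasis_def by (auto split: if_splits)
    ultimately show False using Qbig i0p unfolding k_def by arith
  qed
  have S2: "{(i, j). i \<in> C \<and> j \<in> A \<and> k \<in> fbasis m i j} = {}"
    using S2' by auto
  have "k \<in> fm m A C" unfolding fm_def using S1 by simp
  moreover have "k \<notin> fm m C A" proof - have "card {(i, j). i \<in> C \<and> j \<in> A \<and> k \<in> fbasis m i j} = 0" by (simp only: S2 card.empty) thus ?thesis unfolding fm_def by simp qed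
  ultimately show False using eq by simp
qed

lemma adj_facts:
  assumes "Gamma_adj m u v"
  shows "fm m (fst u) (fst v) = fm m (fst v) (fst u)" "fst u \<subseteq> {1..m}" "fst v \<subseteq> {1..m}"
    "fst u \<noteq> {}" "fst v \<noteq> {}"
  using assms unfolding Gamma_adj_def Gamma_verts_def Vm_def Hmult_def gf2_add_def
  by auto

lemma walk:
  "(Gamma_adj m ^^ n) ({1}, {}) w \<Longrightarrow> n \<ge> 1 \<Longrightarrow> \<forall>x\<in>fst w. x \<le> 2 ^ (n - 1) + 1"
proof (induction n arbitrary: w)
  case 0
  then show ?case by simp
next
  case (Suc n)
  from Suc.prems(1) obtain v where v: "(Gamma_adj m ^^ n) ({1}, {}) v" "Gamma_adj m v w"
    by auto
  note F = adj_facts[OF v(2)]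
  have fv: "finite (fst v)" using F(2) finite_subset by blast
  show ?case
  proof
    fix x assume x: "x \<in> fst w"
    have cx: "x \<le> max (2 * Max (fst v) - 1) (Max (fst v) + 1)"
      using core[OF F(2) F(3) F(4) F(1) x] .
    show "x \<le> 2 ^ (Suc n - 1) + 1"
    proof (cases "n = 0")
      case True
      then have "v = ({1}, {})" using v(1) by simp
      then show ?thesis using cx True by simp
    next
      case False
      then have "\<forall>y\<in>fst v. y \<le> 2 ^ (n - 1) + 1" using Suc.IH v(1) by simp
      then have "Max (fst v) \<le> 2 ^ (n - 1) + 1" using fv F(4) by simp
      moreover have "(2::nat) ^ n = 2 * 2 ^ (n - 1)" using False
        by (metis Suc_pred' neq0_conv power_Suc)
      moreover have "(1::nat) \<le> 2 ^ (n - 1)" by simp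
      ultimately show ?thesis using cx by (simp only: diff_Suc_1)
    qed
  qed
qed

theorem lemma2p3:
  fixes d m :: nat and w :: "nat set \<times> nat set"
  assumes "d \<ge> 1" and "m \<ge> 3" and "m > 2 ^ (d - 1)"
    and "w \<in> Gamma_verts m"
    and "graph_dist_is (Gamma_adj m) ({1}, {}) w d"
  shows "\<forall>n \<in> fst w. n \<le> 2 ^ (d - 1) + 1"
  using walk assms(1,5) unfolding graph_dist_is_def by blast

end
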